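(* Let $1\le k\le n$, let $\mathrm{St}(n,k)=\{Y\in\mathbb{R}^{n\times k}: Y^\top Y=I_k\}$ carry the metric $\langle V,W\rangle=2\operatorname{tr}(V^\top W)$ (the "Euclidean metric"), fix $X\in \mathrm{St}(n,k)$, and let $\beta\colon I\to T_X\mathrm{St}(n,k)$ be a curve ($I$ an interval containing $0$). Let $u(t)=\big(\dot\beta(t)X^\top-X\dot\beta(t)^\top,\;X^\top\dot\beta(t)\big)\in\mathfrak p$. Let $S\colon I\to O(\mathfrak p)$, $q=(R,\theta)\colon I\to O(n)\times O(k)$ and $T\colon I\to O(N_X\mathrm{St}(n,k))$ be the solutions (assumed defined on $I$) of $$\dot S(t)=-\tfrac12\,\mathrm{pr}_{\mathfrak p}\circ \mathrm{ad}_{S(t)u(t)}\circ S(t),\quad S(0)=\mathrm{id}_{\mathfrak p},$$ $$(\dot R(t),\dot\theta(t))=(R(t)\xi_1(t),\theta(t)\xi_2(t)),\quad (R(0),\theta(0))=(I_n,I_k),\quad\text{where }(\xi_1(t),\xi_2(t)):=S(t)u(t),$$ $$\dot T(t)=-P_X^\perp\circ f_{(\xi_1(t),\xi_2(t))}\circ T(t),\quad T(0)=\mathrm{id}_{N_X\mathrm{St}(n,k)}.$$ Define $\widehat\beta(t)=R(t)X\theta(t)^\top$, define $B(t)\colon T_X\mathrm{St}(n,k)\to T_{\widehat\beta(t)}\mathrm{St}(n,k)$ by $B(t)V=R(t)(\eta_1X-X\eta_2)\theta(t)^\top$ where $(\eta_1,\eta_2)=S(t)\big(VX^\top-XV^\top,\,X^\top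 V\big)$, and define $C(t)\colon N_X\mathrm{St}(n,k)\to N_{\widehat\beta(t)}\mathrm{St}(n,k)$ by $C(t)W=R(t)\,(T(t)W)\,\theta(t)^\top$. Then $(\beta(t),\widehat\beta(t),B(t),C(t))$ is an extrinsic rolling of $T_X\mathrm{St}(n,k)$ over $\mathrm{St}(n,k)$ with respect to the Euclidean metric.
   Context: $O(n)\times O(k)$ acts on $\mathbb{R}^{n\times k}$ by $\Phi_{(R,\theta)}(V)=RV\theta^\top$. Its Lie algebra $\mathfrak g=\mathfrak{so}(n)\times\mathfrak{so}(k)$ carries the $\mathrm{Ad}$-invariant scalar product $\langle(\Omega_1,\Psi_1),(\Omega_2,\Psi_2)\rangle=-\operatorname{tr}(\Omega_1\Omega_2)+2\operatorname{tr}(\Psi_1\Psi_2)$; $\mathfrak h=\{(\Omega,\eta)\in\mathfrak g:\Omega X=X\eta\}$ is the Lie algebra of the stabilizer $H$ of $X$, $\mathfrak p=\mathfrak h^\perp$, and $\mathrm{pr}_{\mathfrak p}\colon\mathfrak g\to\mathfrak p$ (projection along $\mathfrak h$) is $\mathrm{pr}_{\mathfrak p}(\Omega,\eta)=(XX^\top\Omega+\Omega XX^\top-2X\eta X^\top,\;X^\top\Omega X-\eta)$. $\mathrm{ad}_Y Z=[Y,Z]$ (componentwise commutator) and $O(\mathfrak p)$ is the group of linear maps of $\mathfrak p$ preserving $\langle\cdot,\cdot\rangle$. $T_Y\mathrm{St}(n,k)=\{V: Y^\top V+V^\top Y=0\}$, $N_Y\mathrm{St}(n,k)$ is its orthogonal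 complement in $\mathbb{R}^{n\times k}$ for the Frobenius product, $P_Y^\perp(V)=\tfrac12 Y(Y^\top V+V^\top Y)$ is the orthogonal projection onto $N_Y\mathrm{St}(n,k)$, and $f_{(\xi_1,\xi_2)}(V)=\xi_1V-V\xi_2$. The linear subspace $T_X\mathrm{St}(n,k)\subset\mathbb{R}^{n\times k}$ is viewed as a submanifold with tangent space $T_X\mathrm{St}(n,k)$ and normal space $N_X\mathrm{St}(n,k)$ at every point. An extrinsic rolling of a submanifold $M$ over a submanifold $\widehat M$ of equal dimension (both isometrically embedded in the same pseudo-Euclidean space) is a quadruple $(\alpha,\widehat\alpha,A,C)$ of curves $\alpha$ in $M$, $\widehat\alpha$ in $\widehat M$ and linear isometries $A(t)\colon T_{\alpha(t)}M\to T_{\widehat\alpha(t)}\widehat M$, $C(t)\colon N_{\alpha(t)}M\to N_{\widehat\alpha(t)}\widehat M$ such that: $\dot{\widehat\alpha}(t)=A(t)\dot\alpha(t)$; $A(t)Z(t)$ is parallel (Levi-Civita) along $\widehat\alpha$ iff $Z$ is parallel along $\alpha$; and $C(t)Z(t)$ is normal parallel along $\widehat\alpha$ iff $Z$ is normal parallel along $\alpha$, where a normal vector field $Z$ along a curve $c$ is normal parallel if the normal component of $\tfrac{d}{dt}Z(t)$ vanishes. On $T_X\mathrm{St}(n,k)$ parallel (tangent or normal) fields along curves are the constant ones. *)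

theory Defs
  imports "HOL-Analysis.Analysis"
begin

(* n x k real matrices are  real^'k^'n ; n = CARD('n), k = CARD('k). *)

definition Stiefel :: "(real^'k^'n) set" where
  "Stiefel = {Y. transpose Y ** Y = mat 1}"

definition StT :: "real^'k^'n \<Rightarrow> (real^'k^'n) set" where
  "StT Y = {V. transpose Y ** V + transpose V ** Y = 0}"

definition frob :: "real^'k^'n \<Rightarrow> real^'k^'n \<Rightarrow> real" where
  "frob V W = trace (transpose V ** W)"

definition StN :: "real^'k^'n \<Rightarrow> (real^'k^'n) set" where
  "StN Y = {W. \<forall>V\<in>StT Y. frob W V = 0}"

definition PperpSt :: "real^'k^'n \<Rightarrow> real^'k^'n \<Rightarrow> real^'k^'n" where
  "PperpSt Y V = (1/2) *\<^sub>R (Y ** (transpose Y ** V + transpose V ** Y))"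

definition eucl_metric :: "real^'k^'n \<Rightarrow> real^'k^'n \<Rightarrow> real" where
  "eucl_metric V W = 2 * trace (transpose V ** W)"

definition gset :: "((real^'n^'n) \<times> (real^'k^'k)) set" where
  "gset = {(\<Omega>, \<Psi>). transpose \<Omega> = - \<Omega> \<and> transpose \<Psi> = - \<Psi>}"

definition gprod :: "(real^'n^'n) \<times> (real^'k^'k) \<Rightarrow> (real^'n^'n) \<times> (real^'k^'k) \<Rightarrow> real" where
  "gprod Z W = - trace (fst Z ** fst W) + 2 * trace (snd Z ** snd W)"

definition hset :: "real^'k^'n \<Rightarrow> ((real^'n^'n) \<times> (real^'k^'k)) set" where
  "hset X = {(\<Omega>, \<eta>) \<in> gset. \<Omega> ** X = X ** \<eta>}"

definition pset :: "real^'k^'n \<Rightarrow> ((real^'n^'n) \<times> (real^'k^'k)) set" where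
  "pset X = {Z \<in> gset. \<forall>W\<in>hset X. gprod Z W = 0}"

definition pr_p :: "real^'k^'n \<Rightarrow> (real^'n^'n) \<times> (real^'k^'k) \<Rightarrow> (real^'n^'n) \<times> (real^'k^'k)" where
  "pr_p X Z = (X ** transpose X ** fst Z + fst Z ** X ** transpose X - 2 *\<^sub>R (X ** snd Z ** transpose X),
               transpose X ** fst Z ** X - snd Z)"

definition ad :: "(real^'n^'n) \<times> (real^'k^'k) \<Rightarrow> (real^'n^'n) \<times> (real^'k^'k) \<Rightarrow> (real^'n^'n) \<times> (real^'k^'k)" where
  "ad Y Z = (fst Y ** fst Z - fst Z ** fst Y, snd Y ** snd Z - snd Z ** snd Y)"

definition f_act :: "(real^'n^'n) \<times> (real^'k^'k) \<Rightarrow> real^'k^'n \<Rightarrow> real^'k^'n" where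
  "f_act \<xi> V = fst \<xi> ** V - V ** snd \<xi>"

definition lin_isom :: "('a \<Rightarrow> 'a \<Rightarrow> real) \<Rightarrow> ('b \<Rightarrow> 'b \<Rightarrow> real) \<Rightarrow> 'a::real_vector set \<Rightarrow> 'b::real_vector set \<Rightarrow> ('a \<Rightarrow> 'b) \<Rightarrow> bool" where
  "lin_isom g h U W f \<longleftrightarrow>
     bij_betw f U W \<and>
     (\<forall>x\<in>U. \<forall>y\<in>U. f (x + y) = f x + f y) \<and>
     (\<forall>c. \<forall>x\<in>U. f (c *\<^sub>R x) = c *\<^sub>R f x) \<and>
     (\<forall>x\<in>U. \<forall>y\<in>U. h (f x) (f y) = g x y)"

definition O_p :: "real^'k^'n \<Rightarrow> ((real^'n^'n) \<times> (real^'k^'k) \<Rightarrow> (real^'n^'n) \<times> (real^'k^'k)) \<Rightarrow> bool" where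
  "O_p X S \<longleftrightarrow> lin_isom gprod gprod (pset X) (pset X) S"

definition O_N :: "real^'k^'n \<Rightarrow> (real^'k^'n \<Rightarrow> real^'k^'n) \<Rightarrow> bool" where
  "O_N X T \<longleftrightarrow> lin_isom eucl_metric eucl_metric (StN X) (StN X) T"

definition gcompl :: "('a \<Rightarrow> 'a \<Rightarrow> real) \<Rightarrow> 'a set \<Rightarrow> 'a set" where
  "gcompl g U = {v. \<forall>w\<in>U. g v w = 0}"

(* Z tangent along c, and Levi-Civita parallel: tangential part of dZ/dt vanishes
   (Gauss formula for a submanifold of the ambient space) *)
definition tan_parallel :: "('a::real_normed_vector \<Rightarrow> 'a \<Rightarrow> real) \<Rightarrow> ('a \<Rightarrow> 'a set) \<Rightarrow> real set \<Rightarrow> (real \<Rightarrow> 'a) \<Rightarrow> (real \<Rightarrow> 'a) \<Rightarrow> bool" where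
  "tan_parallel g TM I c Z \<longleftrightarrow>
     (\<exists>Z'. \<forall>t\<in>I. Z t \<in> TM (c t) \<and> (Z has_vector_derivative Z' t) (at t within I)
                 \<and> Z' t \<in> gcompl g (TM (c t)))"

definition nor_parallel :: "('a::real_normed_vector \<Rightarrow> 'a \<Rightarrow> real) \<Rightarrow> ('a \<Rightarrow> 'a set) \<Rightarrow> real set \<Rightarrow> (real \<Rightarrow> 'a) \<Rightarrow> (real \<Rightarrow> 'a) \<Rightarrow> bool" where
  "nor_parallel g TM I c Z \<longleftrightarrow>
     (\<exists>Z'. \<forall>t\<in>I. Z t \<in> gcompl g (TM (c t)) \<and> (Z has_vector_derivative Z' t) (at t within I)
                 \<and> Z' t \<in> TM (c t))"

definition ext_rolling ::
  "('a::real_normed_vector \<Rightarrow> 'a \<Rightarrow> real) \<Rightarrow> 'a set \<Rightarrow> ('a \<Rightarrow> 'a set) \<Rightarrow> 'a set \<Rightarrow> ('a \<Rightarrow> 'a set) \<Rightarrow>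
   real set \<Rightarrow> (real \<Rightarrow> 'a) \<Rightarrow> (real \<Rightarrow> 'a) \<Rightarrow> (real \<Rightarrow> 'a \<Rightarrow> 'a) \<Rightarrow> (real \<Rightarrow> 'a \<Rightarrow> 'a) \<Rightarrow> bool" where
  "ext_rolling g M TM Mh TMh I \<alpha> \<alpha>h A C \<longleftrightarrow>
     (\<forall>t\<in>I. \<alpha> t \<in> M \<and> \<alpha>h t \<in> Mh) \<and>
     (\<forall>t\<in>I. lin_isom g g (TM (\<alpha> t)) (TMh (\<alpha>h t)) (A t)) \<and>
     (\<forall>t\<in>I. lin_isom g g (gcompl g (TM (\<alpha> t))) (gcompl g (TMh (\<alpha>h t))) (C t)) \<and>
     (\<exists>\<alpha>'. \<forall>t\<in>I. (\<alpha> has_vector_derivative \<alpha>' t) (at t within I) \<and>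
                  (\<alpha>h has_vector_derivative A t (\<alpha>' t)) (at t within I)) \<and>
     (\<forall>Z. (\<forall>t\<in>I. Z t \<in> TM (\<alpha> t)) \<longrightarrow>
          (tan_parallel g TMh I \<alpha>h (\<lambda>t. A t (Z t)) \<longleftrightarrow> tan_parallel g TM I \<alpha> Z)) \<and>
     (\<forall>Z. (\<forall>t\<in>I. Z t \<in> gcompl g (TM (\<alpha> t))) \<longrightarrow>
          (nor_parallel g TMh I \<alpha>h (\<lambda>t. C t (Z t)) \<longleftrightarrow> nor_parallel g TM I \<alpha> Z))"

end

theory Submission
  imports Defs
begin

lemma mm_rdistrib: "((A::real^'n^'m) + B) ** (C::real^'p^'n) = A ** C + B ** C"
  by (vector matrix_matrix_mult_def sum.distrib[symmetric] field_simps)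
lemma mm_ldistrib: "(A::real^'n^'m) ** ((B::real^'p^'n) + C) = A ** B + A ** C"
  by (rule matrix_add_ldistrib)
lemma mm_rsub: "((A::real^'n^'m) - B) ** (C::real^'p^'n) = A ** C - B ** C"
  by (vector matrix_matrix_mult_def sum_subtractf[symmetric] field_simps)
lemma mm_lsub: "(A::real^'n^'m) ** ((B::real^'p^'n) - C) = A ** B - A ** C"
  by (vector matrix_matrix_mult_def sum_subtractf[symmetric] field_simps)
lemma mm_lneg: "(- (A::real^'n^'m)) ** (C::real^'p^'n) = - (A ** C)"
  by (vector matrix_matrix_mult_def sum_negf[symmetric])
lemma mm_rneg: "(A::real^'n^'m) ** (- (C::real^'p^'n)) = - (A ** C)"
  by (vector matrix_matrix_mult_def sum_negf[symmetric])
lemma mm_lscale: "(c *\<^sub>R (A::real^'n^'m)) ** (C::real^'p^'n) = c *\<^sub>R (A ** C)"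
  by (simp add: scalar_matrix_assoc)
lemma mm_rscale: "(A::real^'n^'m) ** (c *\<^sub>R (C::real^'p^'n)) = c *\<^sub>R (A ** C)"
  by (simp add: matrix_scalar_ac scalar_matrix_assoc)
lemma tr_add: "transpose ((A::real^'n^'m) + B) = transpose A + transpose B"
  by (vector transpose_def)
lemma tr_sub: "transpose ((A::real^'n^'m) - B) = transpose A - transpose B"
  by (vector transpose_def)
lemma tr_neg: "transpose (- (A::real^'n^'m)) = - transpose A"
  by (vector transpose_def)
lemma tr_zero: "transpose (0::real^'n^'m) = 0"
  by (vector transpose_def)
lemma trace_scale: "trace (c *\<^sub>R (A::real^'n^'n)) = c * trace A"
  by (simp add: trace_def sum_distrib_left)
lemma trace_neg: "trace (- (A::real^'n^'n)) = - trace A"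
  by (simp add: trace_def sum_negf)
lemma trace_transp: "trace (transpose (A::real^'n^'n)) = trace A"
  by (simp add: trace_def transpose_def)
lemma frob_inner: "frob V W = V \<bullet> W"
  unfolding frob_def trace_def matrix_matrix_mult_def transpose_def inner_vec_def inner_real_def
  by (simp, subst sum.swap, simp add: mult.commute)

lemma XtX: "X \<in> Stiefel \<Longrightarrow> transpose X ** X = mat 1"
  by (simp add: Stiefel_def)
lemma XtX2: "X \<in> Stiefel \<Longrightarrow> transpose X ** (X ** Z) = Z"
  by (simp add: Stiefel_def matrix_mul_assoc)

lemmas msimps = XtX XtX2 mm_rdistrib mm_ldistrib mm_rsub mm_lsub mm_lneg mm_rneg mm_lscale mm_rscale
  tr_add tr_sub tr_neg tr_zero transpose_scalar matrix_transpose_mul 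
  matrix_mul_assoc[symmetric]

definition psi :: "real^'k^'n \<Rightarrow> (real^'n^'n) \<times> (real^'k^'k) \<Rightarrow> real^'k^'n" where
  "psi X \<eta> = fst \<eta> ** X - X ** snd \<eta>"

definition phi :: "real^'k^'n \<Rightarrow> real^'k^'n \<Rightarrow> (real^'n^'n) \<times> (real^'k^'k)" where
  "phi X V = (V ** transpose X - X ** transpose V, transpose X ** V)"


lemma StT_iff: "V \<in> StT X \<longleftrightarrow> transpose V ** X = - (transpose X ** V)"
  by (auto simp: StT_def eq_neg_iff_add_eq_0 add.commute)

lemma StT_2: "V \<in> StT X \<Longrightarrow> transpose V ** (X ** Z) = - (transpose X ** (V ** Z))"
  by (simp add: StT_iff matrix_mul_assoc mm_lneg)

lemma A1: assumes X: "X \<in> Stiefel" and V: "V \<in> StT X" shows "psi X (phi X V) = V"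
proof -
  have "psi X (phi X V) = V - X ** (transpose V ** X + transpose X ** V)"
    using X by (simp add: psi_def phi_def msimps XtX2 algebra_simps)
  also have "\<dots> = V" using V by (simp add: StT_iff)
  finally show ?thesis .
qed

lemma A2: assumes X: "X \<in> Stiefel" and e: "e \<in> gset" shows "psi X e \<in> StT X"
proof -
  obtain a b where ab: "e = (a,b)" "transpose a = - a" "transpose b = - b"
    using e by (auto simp: gset_def)
  show ?thesis using X ab by (simp add: StT_def psi_def msimps XtX2)
qed

lemma A3: assumes X: "X \<in> Stiefel" and e: "e \<in> gset" shows "phi X (psi X e) = pr_p X e"
proof -
  obtain a b where ab: "e = (a,b)" "transpose a = - a" "transpose b = - b"
    using e by (auto simp: gset_def)
  show ?thesis using X ab by (simp add: pr_p_def phi_def psi_def msimps XtX2 algebra_simps scaleR_2)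
qed

lemma A4: assumes X: "X \<in> Stiefel" and V: "V \<in> StT X" shows "phi X V \<in> pset X"
proof -
  have g: "phi X V \<in> gset"
    using V by (simp add: gset_def phi_def msimps StT_iff)
  have "gprod (phi X V) w = 0" if w: "w \<in> hset X" for w
  proof -
    obtain \<Omega> \<eta> where w': "w = (\<Omega>, \<eta>)" "transpose \<Omega> = - \<Omega>" "transpose \<eta> = - \<eta>"
      "\<Omega> ** X = X ** \<eta>"
      using w by (auto simp: hset_def gset_def)
    have "transpose X ** transpose \<Omega> = transpose \<eta> ** transpose X"
      using w'(4) by (metis matrix_transpose_mul)
    hence h1: "transpose X ** \<Omega> = \<eta> ** transpose X"
      using w' by (simp add: mm_lneg mm_rneg)
    have t1: "trace (V ** (transpose X ** \<Omega>)) = trace (transpose X ** (V ** \<eta>))"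
      unfolding h1 using trace_mul_sym[of "V ** \<eta>" "transpose X"] by (simp add: matrix_mul_assoc)
    have t2: "trace (X ** (transpose V ** \<Omega>)) = - trace (transpose X ** (V ** \<eta>))"
    proof -
      have "trace (X ** (transpose V ** \<Omega>)) = trace (transpose V ** (\<Omega> ** X))"
        by (subst trace_mul_sym) (simp only: matrix_mul_assoc)
      also have "\<dots> = trace (transpose V ** (X ** \<eta>))" using w' by simp
      also have "\<dots> = - trace (transpose X ** (V ** \<eta>))"
        using V by (simp add: StT_2 trace_neg)
      finally show ?thesis .
    qed
    show ?thesis using t1 t2 w'
      by (simp add: gprod_def phi_def msimps trace_sub)
  qed
  thus ?thesis using g by (simp add: pset_def)
qed

lemma trace_VWt: "trace ((V::real^'k^'n) ** transpose W) = trace (transpose V ** W)"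
proof -
  have "trace (V ** transpose W) = trace (transpose (V ** transpose W))" by (simp add: trace_transp)
  also have "\<dots> = trace (W ** transpose V)" by (simp add: matrix_transpose_mul)
  also have "\<dots> = trace (transpose V ** W)" by (rule trace_mul_sym)
  finally show ?thesis .
qed

lemma A6: assumes X: "X \<in> Stiefel" and V: "V \<in> StT X" and W: "W \<in> StT X"
  shows "gprod (phi X V) (phi X W) = eucl_metric V W"
proof -
  have xx: "transpose X ** X = mat 1" using X by (simp add: Stiefel_def)
  have e1: "trace (V ** (transpose X ** (W ** transpose X))) = trace (transpose X ** (V ** (transpose X ** W)))"
  proof -
    have "trace ((V ** (transpose X ** W)) ** transpose X) = trace (transpose X ** (V ** (transpose X ** W)))"
      by (rule trace_mul_sym)
    then show ?thesis by (simp add: matrix_mul_assoc)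
  qed
  have e2: "trace (V ** (transpose X ** (X ** transpose W))) = trace (transpose V ** W)"
    by (simp add: matrix_mul_assoc xx trace_VWt)
  have e3: "trace (X ** (transpose V ** (W ** transpose X))) = trace (transpose V ** W)"
  proof -
    have "trace (X ** (transpose V ** (W ** transpose X))) = trace ((transpose V ** (W ** transpose X)) ** X)"
      by (rule trace_mul_sym)
    then show ?thesis by (simp add: matrix_mul_assoc[symmetric] xx)
  qed
  have e4: "trace (X ** (transpose V ** (X ** transpose W))) = trace (transpose X ** (V ** (transpose X ** W)))"
  proof -
    have "trace (X ** (transpose V ** (X ** transpose W))) = trace (((transpose V ** X) ** transpose W) ** X)"
      by (subst trace_mul_sym) (simp add: matrix_mul_assoc)
    also have "\<dots> = trace ((transpose V ** X) ** (transpose W ** X))"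
      by (simp add: matrix_mul_assoc)
    also have "\<dots> = trace (transpose X ** (V ** (transpose X ** W)))"
      using V W by (simp add: StT_iff mm_rneg mm_lneg matrix_mul_assoc)
    finally show ?thesis .
  qed
  show ?thesis using e1 e2 e3 e4
    by (simp add: gprod_def phi_def eucl_metric_def msimps trace_sub trace_add trace_neg)
qed

lemma trace_sym_skew: assumes "transpose S = S" "transpose K = - K"
  shows "trace ((S::real^'n^'n) ** K) = 0"
proof -
  have "trace (S ** K) = trace (transpose (S ** K))" by (simp add: trace_transp)
  also have "\<dots> = trace (transpose K ** transpose S)" by (simp add: matrix_transpose_mul)
  also have "\<dots> = - trace (K ** S)" using assms by (simp add: mm_lneg trace_neg)
  also have "\<dots> = - trace (S ** K)" by (subst trace_mul_sym, rule refl)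
  finally show ?thesis by simp
qed

lemma XS_normal: assumes "transpose S = S" shows "X ** S \<in> StN X"
  unfolding StN_def
proof safe
  fix V assume V: "V \<in> StT X"
  have "frob (X ** S) V = trace (S ** (transpose X ** V))"
    using assms by (simp add: frob_def matrix_transpose_mul matrix_mul_assoc)
  also have "\<dots> = 0" using V assms
    by (intro trace_sym_skew) (auto simp: StT_iff matrix_transpose_mul)
  finally show "frob (X ** S) V = 0" .
qed

lemma Pperp_normal: "PperpSt X M \<in> StN X"
proof -
  have "PperpSt X M = X ** ((1/2) *\<^sub>R (transpose X ** M + transpose M ** X))"
    by (simp add: PperpSt_def mm_rscale)
  moreover have "transpose ((1/2) *\<^sub>R (transpose X ** M + transpose M ** X)) = (1/2) *\<^sub>R (transpose X ** M + transpose M ** X)"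
    by (simp add: msimps)
  ultimately show ?thesis using XS_normal[of "(1/2) *\<^sub>R (transpose X ** M + transpose M ** X)" X] by simp
qed

lemma Pperp_tangent: assumes X: "X \<in> Stiefel" shows "M - PperpSt X M \<in> StT X"
  using X by (simp add: StT_def PperpSt_def msimps algebra_simps)

lemma gprod_diff: "gprod (a - b) w = gprod a w - gprod b w"
  by (simp add: gprod_def mm_rsub trace_sub algebra_simps)
lemma gprod_add: "gprod (a + b) w = gprod a w + gprod b w"
  by (simp add: gprod_def mm_rdistrib trace_add algebra_simps)
lemma gprod_scale: "gprod (c *\<^sub>R a) w = c * gprod a w"
  by (simp add: gprod_def mm_lscale trace_scale algebra_simps)
lemma gprod_sym: "gprod a w = gprod w a"
  unfolding gprod_def by (metis trace_mul_sym)

lemma pset_diff: "a \<in> pset X \<Longrightarrow> b \<in> pset X \<Longrightarrow> a - b \<in> pset X"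
  by (auto simp: pset_def gset_def gprod_diff tr_sub)
lemma pset_add: "a \<in> pset X \<Longrightarrow> b \<in> pset X \<Longrightarrow> a + b \<in> pset X"
  by (auto simp: pset_def gset_def gprod_add tr_add)
lemma pset_scale: "a \<in> pset X \<Longrightarrow> c *\<^sub>R a \<in> pset X"
  by (auto simp: pset_def gset_def gprod_scale transpose_scalar)
lemma pset_gset: "a \<in> pset X \<Longrightarrow> a \<in> gset"
  by (auto simp: pset_def)

lemma inner_self_trace: "(P::real^'k^'n) \<bullet> P = trace (transpose P ** P)"
  by (simp add: frob_inner[symmetric] frob_def)

lemma ph0: assumes X: "X \<in> Stiefel" and p: "e \<in> pset X" and h: "e \<in> hset X" shows "e = 0"
proof -
  obtain e1 e2 where e: "e = (e1, e2)" "transpose e1 = - e1" "transpose e2 = - e2" "e1 ** X = X ** e2"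
    using h by (auto simp: hset_def gset_def)
  have xx: "transpose X ** X = mat 1" using X by (simp add: Stiefel_def)
  define Q where "Q = mat 1 - X ** transpose X"
  have QT: "transpose Q = Q" by (simp add: Q_def msimps)
  have QX: "Q ** X = 0" by (simp add: Q_def msimps xx)
  have QQ: "Q ** Q = Q" using X by (simp add: Q_def msimps xx)
  define P where "P = Q ** e1 ** Q"
  have PT: "transpose P = - P" by (simp add: P_def msimps QT e)
  define w where "w = (X ** e2 ** transpose X - P, e2)"
  have wh: "w \<in> hset X"
  proof -
    have "transpose (X ** e2 ** transpose X) = - (X ** e2 ** transpose X)"
      by (simp add: msimps e)
    moreover have "(X ** e2 ** transpose X - P) ** X = X ** e2"
      by (simp add: P_def msimps xx QX[unfolded matrix_mul_assoc[symmetric]])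
    ultimately show ?thesis using e PT by (simp add: hset_def gset_def w_def tr_sub)
  qed
  have "gprod e w = 0" using p wh by (auto simp: pset_def)
  moreover have "gprod e w = - trace (e1 ** (X ** e2 ** transpose X)) + trace (e1 ** P) + 2 * trace (e2 ** e2)"
    by (simp add: gprod_def w_def e mm_lsub trace_sub)
  moreover have "trace (e1 ** (X ** e2 ** transpose X)) = trace (e2 ** e2)"
  proof -
    have "trace (e1 ** (X ** e2 ** transpose X)) = trace ((X ** e2 ** e2) ** transpose X)"
      by (simp add: matrix_mul_assoc e(4))
    also have "\<dots> = trace (transpose X ** (X ** e2 ** e2))" by (rule trace_mul_sym)
    also have "\<dots> = trace (e2 ** e2)" by (simp add: matrix_mul_assoc xx)
    finally show ?thesis .
  qed
  moreover have "trace (e1 ** P) = trace (P ** P)"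
  proof -
    have "trace (P ** P) = trace (Q ** (e1 ** (Q ** (Q ** (e1 ** Q)))))"
      by (simp add: P_def matrix_mul_assoc)
    also have "\<dots> = trace (Q ** (e1 ** (Q ** (e1 ** Q))))"
      by (simp add: matrix_mul_assoc QQ)
    also have "\<dots> = trace ((e1 ** (Q ** (e1 ** Q))) ** Q)" by (rule trace_mul_sym)
    also have "\<dots> = trace (e1 ** P)" by (simp add: P_def matrix_mul_assoc[symmetric] QQ)
    finally show ?thesis by simp
  qed
  ultimately have "trace (P ** P) + trace (e2 ** e2) = 0" by simp
  hence "P \<bullet> P + e2 \<bullet> e2 = 0"
    by (simp add: inner_self_trace PT e mm_lneg trace_neg)
  hence "P \<bullet> P = 0 \<and> e2 \<bullet> e2 = 0"
    using add_nonneg_eq_0_iff[OF inner_ge_zero inner_ge_zero] by blast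
  hence P0: "P = 0" and e20: "e2 = 0" by simp_all
  have e1X: "e1 ** X = 0" using e e20 by simp
  have Xe1: "transpose X ** e1 = 0"
  proof -
    have "transpose (e1 ** X) = 0" using e1X by (simp add: tr_zero)
    thus ?thesis using e(2) by (simp add: matrix_transpose_mul mm_rneg)
  qed
  have "P = e1 - e1 ** X ** transpose X - X ** (transpose X ** e1) + X ** (transpose X ** e1) ** X ** transpose X"
    by (simp add: P_def Q_def mm_lsub mm_rsub matrix_mul_assoc)
  also have "\<dots> = e1" by (simp add: e1X Xe1)
  finally have "P = e1" .
  thus ?thesis using P0 e20 e by (simp add: zero_prod_def)
qed

lemma vec_two: "(2::real^'b^'a) * A = 2 *\<^sub>R A"
  by (simp add: vec_eq_iff)

lemma vec_two2: "A * (2::real^'b^'a) = 2 *\<^sub>R A"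
  by (simp add: vec_eq_iff)

lemma A5: assumes X: "X \<in> Stiefel" and e: "e \<in> pset X" shows "pr_p X e = e"
proof -
  have eg: "e \<in> gset" using e by (rule pset_gset)
  have pp: "pr_p X e \<in> pset X"
    using A3[OF X eg] A4[OF X A2[OF X eg]] by simp
  define d where "d = e - pr_p X e"
  have dp: "d \<in> pset X" unfolding d_def using e pp by (rule pset_diff)
  obtain e1 e2 where ee: "e = (e1, e2)" "transpose e1 = - e1" "transpose e2 = - e2"
    using eg by (auto simp: gset_def)
  have "fst d ** X = X ** snd d"
    using X by (simp add: d_def ee pr_p_def msimps algebra_simps) (simp add: vec_two vec_two2 mm_rscale)
  hence dh: "d \<in> hset X" using pset_gset[OF dp] by (cases d) (simp add: hset_def)
  have "d = 0" using ph0[OF X dp dh] .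
  thus ?thesis by (simp add: d_def)
qed

lemma psi_pr: assumes X: "X \<in> Stiefel" and a: "a \<in> gset" shows "psi X (pr_p X a) = psi X a"
  using A3[OF X a, symmetric] A1[OF X A2[OF X a]] by simp

lemma ad_gset: "a \<in> gset \<Longrightarrow> b \<in> gset \<Longrightarrow> ad a b \<in> gset"
  by (auto simp: gset_def ad_def msimps)

lemma A7: assumes X: "X \<in> Stiefel" and A: "A \<in> StT X" and B: "B \<in> StT X"
  shows "f_act (phi X A) B - (1/2) *\<^sub>R psi X (ad (phi X A) (phi X B))
     = - (1/2) *\<^sub>R (X ** (transpose A ** B + transpose B ** A))"
proof -
  have a1: "transpose A ** X = - (transpose X ** A)" using A by (simp add: StT_iff)
  have b1: "transpose B ** X = - (transpose X ** B)" using B by (simp add: StT_iff)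
  have a2: "\<And>Z. transpose A ** (X ** Z) = - (transpose X ** (A ** Z))" using A by (simp add: StT_2)
  have b2: "\<And>Z. transpose B ** (X ** Z) = - (transpose X ** (B ** Z))" using B by (simp add: StT_2)
  show ?thesis using X
    by (simp add: f_act_def phi_def psi_def ad_def msimps a1 b1 a2 b2 algebra_simps)
qed

lemma M_normal: assumes X: "X \<in> Stiefel" and xi: "\<xi> \<in> pset X" and eta: "\<eta> \<in> pset X"
  shows "f_act \<xi> (psi X \<eta>) - (1/2) *\<^sub>R psi X (ad \<xi> \<eta>) \<in> StN X"
proof -
  define A where "A = psi X \<xi>"
  define B where "B = psi X \<eta>"
  have A: "A \<in> StT X" unfolding A_def using A2[OF X pset_gset[OF xi]] .
  have B: "B \<in> StT X" unfolding B_def using A2[OF X pset_gset[OF eta]] .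
  have xA: "\<xi> = phi X A" unfolding A_def using A3[OF X pset_gset[OF xi]] A5[OF X xi] by simp
  have eB: "\<eta> = phi X B" unfolding B_def using A3[OF X pset_gset[OF eta]] A5[OF X eta] by simp
  have "f_act \<xi> (psi X \<eta>) - (1/2) *\<^sub>R psi X (ad \<xi> \<eta>) = X ** (- (1/2) *\<^sub>R (transpose A ** B + transpose B ** A))"
    using A7[OF X A B] unfolding xA eB A1[OF X B] by (simp add: mm_rscale mm_rneg)
  moreover have "transpose (- (1/2) *\<^sub>R (transpose A ** B + transpose B ** A)) = - (1/2) *\<^sub>R (transpose A ** B + transpose B ** A)"
    by (simp add: msimps)
  ultimately show ?thesis using XS_normal by metis
qed

lemma norm_le_sum_vec: "norm (x::'a::real_normed_vector^'n) \<le> (\<Sum>i\<in>UNIV. norm (x$i))"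
  unfolding norm_vec_def by (rule L2_set_le_sum) simp

lemma mm_entry_bound: "\<bar>((A::real^'n^'m) ** (B::real^'p^'n)) $ i $ j\<bar> \<le> real CARD('n) * (norm A * norm B)"
proof -
  have "\<bar>(A ** B) $ i $ j\<bar> = \<bar>\<Sum>k\<in>UNIV. A$i$k * B$k$j\<bar>" by (simp add: matrix_matrix_mult_def)
  also have "\<dots> \<le> (\<Sum>k\<in>UNIV. \<bar>A$i$k\<bar> * \<bar>B$k$j\<bar>)" by (rule order_trans[OF sum_abs]) (simp add: abs_mult)
  also have "\<dots> \<le> (\<Sum>k\<in>(UNIV::'n set). norm A * norm B)"
  proof (rule sum_mono)
    fix k
    have a: "\<bar>A$i$k\<bar> \<le> norm A" by (rule order_trans[OF component_le_norm_cart Finite_Cartesian_Product.norm_nth_le])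
    have b: "\<bar>B$k$j\<bar> \<le> norm B" by (rule order_trans[OF component_le_norm_cart Finite_Cartesian_Product.norm_nth_le])
    show "\<bar>A$i$k\<bar> * \<bar>B$k$j\<bar> \<le> norm A * norm B" using a b by (intro mult_mono) auto
  qed
  finally show ?thesis by simp
qed

lemma bb_mm: "bounded_bilinear (\<lambda>(A::real^'n^'m) (B::real^'p^'n). A ** B)"
proof (rule bounded_bilinear.intro)
  show "\<exists>K. \<forall>(a::real^'n^'m) (b::real^'p^'n). norm (a ** b) \<le> norm a * norm b * K"
  proof (intro exI allI)
    fix a :: "real^'n^'m" and b :: "real^'p^'n"
    have "norm (a ** b) \<le> (\<Sum>i\<in>UNIV. norm ((a ** b)$i))" by (rule norm_le_sum_vec)
    also have "\<dots> \<le> (\<Sum>i\<in>(UNIV::'m set). \<Sum>j\<in>(UNIV::'p set). \<bar>(a ** b)$i$j\<bar>)"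
      by (rule sum_mono) (rule norm_le_l1_cart)
    also have "\<dots> \<le> (\<Sum>i\<in>(UNIV::'m set). \<Sum>j\<in>(UNIV::'p set). real CARD('n) * (norm a * norm b))"
      by (intro sum_mono mm_entry_bound)
    also have "\<dots> = norm a * norm b * (real CARD('m) * real CARD('p) * real CARD('n))"
      by simp
    finally show "norm (a ** b) \<le> norm a * norm b * (real CARD('m) * real CARD('p) * real CARD('n))" .
  qed
qed (simp_all add: mm_rdistrib mm_ldistrib mm_lscale mm_rscale)

lemma mm_deriv:
  assumes "(f has_vector_derivative f') (at x within s)" "(g has_vector_derivative g') (at x within s)"
  shows "((\<lambda>x. (f x::real^'n^'m) ** (g x::real^'p^'n)) has_vector_derivative (f x ** g' + f' ** g x)) (at x within s)"
  by (rule bounded_bilinear.has_vector_derivative[OF bb_mm assms])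

lemma fst_deriv: "(f has_vector_derivative f') F \<Longrightarrow> ((\<lambda>x. fst (f x)) has_vector_derivative fst f') F"
  by (rule bounded_linear.has_vector_derivative[OF bounded_linear_fst])
lemma snd_deriv: "(f has_vector_derivative f') F \<Longrightarrow> ((\<lambda>x. snd (f x)) has_vector_derivative snd f') F"
  by (rule bounded_linear.has_vector_derivative[OF bounded_linear_snd])
lemma tr_deriv: "(f has_vector_derivative f') F \<Longrightarrow> ((\<lambda>x. transpose (f x :: real^'n^'m)) has_vector_derivative transpose f') F"
proof -
  have "bounded_linear (transpose :: real^'n^'m \<Rightarrow> real^'m^'n)"
    unfolding linear_conv_bounded_linear[symmetric] by (rule linearI) (simp_all add: tr_add transpose_scalar)
  thus "(f has_vector_derivative f') F \<Longrightarrow> ?thesis" by (rule bounded_linear.has_vector_derivative)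
qed
lemma inner_deriv:
  assumes "(f has_vector_derivative f') (at x within s)" "(g has_vector_derivative g') (at x within s)"
  shows "((\<lambda>x. (f x::'a::real_inner) \<bullet> g x) has_vector_derivative (f x \<bullet> g' + f' \<bullet> g x)) (at x within s)"
  by (rule bounded_bilinear.has_vector_derivative[OF bounded_bilinear_inner assms])

definition Qm :: "real^'n^'n \<Rightarrow> real^'k^'k \<Rightarrow> real^'k^'n \<Rightarrow> real^'k^'n" where
  "Qm R \<theta> M = R ** M ** transpose \<theta>"
definition Qi :: "real^'n^'n \<Rightarrow> real^'k^'k \<Rightarrow> real^'k^'n \<Rightarrow> real^'k^'n" where
  "Qi R \<theta> N = transpose R ** N ** \<theta>"

lemma orthD: assumes "orthogonal_matrix (Q::real^'n^'n)"
  shows "transpose Q ** Q = mat 1" "Q ** transpose Q = mat 1"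
  using assms by (auto simp: orthogonal_matrix_def)

context
  fixes R :: "real^'n^'n" and \<theta> :: "real^'k^'k"
  assumes oR: "orthogonal_matrix R" and o\<theta>: "orthogonal_matrix \<theta>"
begin

lemma oo: "transpose R ** R = mat 1" "R ** transpose R = mat 1"
  "transpose \<theta> ** \<theta> = mat 1" "\<theta> ** transpose \<theta> = mat 1"
  using orthD[OF oR] orthD[OF o\<theta>] by auto

lemma oo2: "transpose R ** (R ** Z) = Z" "R ** (transpose R ** Z') = Z'"
  "transpose \<theta> ** (\<theta> ** U) = U" "\<theta> ** (transpose \<theta> ** U') = U'"
  by (simp_all add: matrix_mul_assoc oo)

lemmas ooall = oo oo2

lemma G1: "Qi R \<theta> (Qm R \<theta> M) = M" "Qm R \<theta> (Qi R \<theta> N) = N"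
  by (simp_all add: Qi_def Qm_def matrix_mul_assoc[symmetric] ooall)

lemma G2: "eucl_metric (Qm R \<theta> M) N = eucl_metric M (Qi R \<theta> N)"
proof -
  have "trace (transpose (Qm R \<theta> M) ** N) = trace (\<theta> ** (transpose M ** (transpose R ** N)))"
    by (simp add: Qm_def matrix_transpose_mul matrix_mul_assoc)
  also have "\<dots> = trace ((transpose M ** (transpose R ** N)) ** \<theta>)" by (rule trace_mul_sym)
  also have "\<dots> = trace (transpose M ** Qi R \<theta> N)" by (simp add: Qi_def matrix_mul_assoc)
  finally show ?thesis by (simp add: eucl_metric_def)
qed

lemma G3: "eucl_metric (Qm R \<theta> M) (Qm R \<theta> N) = eucl_metric M N"
  by (simp add: G2 G1)

lemma G4: "X \<in> Stiefel \<Longrightarrow> R ** X ** transpose \<theta> \<in> Stiefel"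
  by (simp add: Stiefel_def matrix_transpose_mul matrix_mul_assoc[symmetric] ooall XtX2)

lemma G5: "V \<in> StT (R ** X ** transpose \<theta>) \<longleftrightarrow> Qi R \<theta> V \<in> StT X"
proof -
  have e: "transpose (R ** X ** transpose \<theta>) ** V + transpose V ** (R ** X ** transpose \<theta>)
     = \<theta> ** (transpose X ** Qi R \<theta> V + transpose (Qi R \<theta> V) ** X) ** transpose \<theta>"
    by (simp add: Qi_def msimps ooall)
  have e2: "transpose X ** Qi R \<theta> V + transpose (Qi R \<theta> V) ** X
     = transpose \<theta> ** (transpose (R ** X ** transpose \<theta>) ** V + transpose V ** (R ** X ** transpose \<theta>)) ** \<theta>"
    unfolding e by (simp add: matrix_mul_assoc[symmetric] ooall)
  show ?thesis unfolding StT_def using e e2 by auto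
qed

end

lemma eucl_sym: "eucl_metric V W = eucl_metric W V"
  by (simp add: eucl_metric_def frob_def[symmetric] frob_inner inner_commute)

lemma eucl_inner: "eucl_metric V W = 2 * (V \<bullet> W)"
  by (simp add: eucl_metric_def frob_def[symmetric] frob_inner)

lemma G6: "gcompl eucl_metric (StT X) = StN X"
  by (auto simp: gcompl_def StN_def eucl_metric_def frob_def)

lemma G7: assumes oR: "orthogonal_matrix R" and o\<theta>: "orthogonal_matrix \<theta>"
  shows "W \<in> gcompl eucl_metric (StT (R ** X ** transpose \<theta>)) \<longleftrightarrow> Qi R \<theta> W \<in> StN X"
proof -
  note g1 = G1[OF oR o\<theta>] and g3 = G3[OF oR o\<theta>] and g5 = G5[OF oR o\<theta>]
  have "W \<in> gcompl eucl_metric (StT (R ** X ** transpose \<theta>)) \<longleftrightarrow>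
        (\<forall>U \<in> StT X. eucl_metric (Qi R \<theta> W) U = 0)"
  proof
    assume a: "W \<in> gcompl eucl_metric (StT (R ** X ** transpose \<theta>))"
    show "\<forall>U \<in> StT X. eucl_metric (Qi R \<theta> W) U = 0"
    proof
      fix U assume U: "U \<in> StT X"
      have "Qm R \<theta> U \<in> StT (R ** X ** transpose \<theta>)" using U g5 g1 by simp
      hence "eucl_metric W (Qm R \<theta> U) = 0" using a by (simp add: gcompl_def)
      thus "eucl_metric (Qi R \<theta> W) U = 0" using g3[of "Qi R \<theta> W" U] g1 by simp
    qed
  next
    assume a: "\<forall>U \<in> StT X. eucl_metric (Qi R \<theta> W) U = 0"
    show "W \<in> gcompl eucl_metric (StT (R ** X ** transpose \<theta>))"
      unfolding gcompl_def
    proof safe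
      fix V assume V: "V \<in> StT (R ** X ** transpose \<theta>)"
      hence "eucl_metric (Qi R \<theta> W) (Qi R \<theta> V) = 0" using a g5 by simp
      thus "eucl_metric W V = 0" using g3[of "Qi R \<theta> W" "Qi R \<theta> V"] g1 by simp
    qed
  qed
  also have "\<dots> \<longleftrightarrow> Qi R \<theta> W \<in> StN X"
    using G6[of X] by (auto simp: gcompl_def)
  finally show ?thesis .
qed

lemma phi_add: "phi X (V + W) = phi X V + phi X W"
  by (simp add: phi_def msimps prod_eq_iff algebra_simps)
lemma phi_scale: "phi X (c *\<^sub>R V) = c *\<^sub>R phi X V"
  by (simp add: phi_def msimps prod_eq_iff algebra_simps)
lemma psi_add: "psi X (a + b) = psi X a + psi X b"
  by (simp add: psi_def msimps algebra_simps)
lemma psi_scale: "psi X (c *\<^sub>R a) = c *\<^sub>R psi X a"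
  by (simp add: psi_def msimps algebra_simps)
lemma Qm_add: "Qm R \<theta> (M + N) = Qm R \<theta> M + Qm R \<theta> N"
  by (simp add: Qm_def msimps)
lemma Qm_scale: "Qm R \<theta> (c *\<^sub>R M) = c *\<^sub>R Qm R \<theta> M"
  by (simp add: Qm_def msimps)
lemma StT_add: "V \<in> StT X \<Longrightarrow> W \<in> StT X \<Longrightarrow> V + W \<in> StT X"
  by (simp add: StT_def msimps algebra_simps)
lemma StT_scale: "V \<in> StT X \<Longrightarrow> c *\<^sub>R V \<in> StT X"
proof -
  assume "V \<in> StT X"
  hence "c *\<^sub>R (transpose X ** V + transpose V ** X) = 0" by (simp add: StT_def)
  thus ?thesis by (simp add: StT_def msimps scaleR_right_distrib)
qed

lemma L_B: assumes X: "X \<in> Stiefel" and oR: "orthogonal_matrix R" and o\<theta>: "orthogonal_matrix \<theta>"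
  and S: "O_p X S"
  shows "lin_isom eucl_metric eucl_metric (StT X) (StT (R ** X ** transpose \<theta>))
           (\<lambda>V. Qm R \<theta> (psi X (S (phi X V))))"
proof -
  note g1 = G1[OF oR o\<theta>] and g3 = G3[OF oR o\<theta>] and g5 = G5[OF oR o\<theta>]
  have Sall: "bij_betw S (pset X) (pset X) \<and> (\<forall>x\<in>pset X. \<forall>y\<in>pset X. S (x + y) = S x + S y) \<and>
     (\<forall>c. \<forall>x\<in>pset X. S (c *\<^sub>R x) = c *\<^sub>R S x) \<and> (\<forall>x\<in>pset X. \<forall>y\<in>pset X. gprod (S x) (S y) = gprod x y)"
    using S unfolding O_p_def lin_isom_def .
  have Sb: "bij_betw S (pset X) (pset X)" using Sall by (rule conjunct1)
  have Sadd: "S (x + y) = S x + S y" if "x \<in> pset X" "y \<in> pset X" for x y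
    using bspec[OF bspec[OF conjunct1[OF conjunct2[OF Sall]] that(1)] that(2)] .
  have Ssc: "S (c *\<^sub>R x) = c *\<^sub>R S x" if "x \<in> pset X" for c x
    using bspec[OF spec[OF conjunct1[OF conjunct2[OF conjunct2[OF Sall]]], of c] that] .
  have Sm: "gprod (S x) (S y) = gprod x y" if "x \<in> pset X" "y \<in> pset X" for x y
    using bspec[OF bspec[OF conjunct2[OF conjunct2[OF conjunct2[OF Sall]]] that(1)] that(2)] .
  have Sin: "\<And>x. x \<in> pset X \<Longrightarrow> S x \<in> pset X" using bij_betw_apply[OF Sb] .
  have Sinj: "inj_on S (pset X)" using Sb by (simp add: bij_betw_def)
  have Simg: "S ` pset X = pset X" using Sb by (simp add: bij_betw_def)
  have pp: "phi X (psi X e) = e" if "e \<in> pset X" for e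
    using A3[OF X pset_gset[OF that]] A5[OF X that] by simp
  have phiP: "\<And>V. V \<in> StT X \<Longrightarrow> phi X V \<in> pset X" using A4[OF X] .
  have psiT: "psi X e \<in> StT X" if "e \<in> pset X" for e using A2[OF X pset_gset[OF that]] .
  let ?f = "\<lambda>V. Qm R \<theta> (psi X (S (phi X V)))"
  have into: "?f V \<in> StT (R ** X ** transpose \<theta>)" if "V \<in> StT X" for V
    using g5 g1 psiT Sin phiP that by simp
  have inj: "inj_on ?f (StT X)"
  proof (rule inj_onI)
    fix V W assume V: "V \<in> StT X" and W: "W \<in> StT X" and e: "?f V = ?f W"
    have "psi X (S (phi X V)) = psi X (S (phi X W))" using arg_cong[OF e, of "Qi R \<theta>"] g1 by simp
    hence "phi X (psi X (S (phi X V))) = phi X (psi X (S (phi X W)))" by simp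
    hence "S (phi X V) = S (phi X W)" using pp Sin phiP V W by simp
    hence "phi X V = phi X W" using Sinj phiP V W by (meson inj_onD)
    hence "psi X (phi X V) = psi X (phi X W)" by simp
    thus "V = W" using A1[OF X] V W by simp
  qed
  have surj: "?f ` StT X = StT (R ** X ** transpose \<theta>)"
  proof
    show "?f ` StT X \<subseteq> StT (R ** X ** transpose \<theta>)" using into by blast
  next
    show "StT (R ** X ** transpose \<theta>) \<subseteq> ?f ` StT X"
    proof
      fix Y assume Y: "Y \<in> StT (R ** X ** transpose \<theta>)"
      define N where "N = Qi R \<theta> Y"
      have N: "N \<in> StT X" using Y g5 N_def by simp
      have "phi X N \<in> S ` pset X" using Simg phiP[OF N] by simp
      then obtain e where e: "e \<in> pset X" "S e = phi X N" by (auto elim!: imageE)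
      have "?f (psi X e) = Y" using e pp A1[OF X N] g1 N_def by simp
      moreover have "psi X e \<in> StT X" using psiT e by simp
      ultimately show "Y \<in> ?f ` StT X" by (rule image_eqI[OF sym])
    qed
  qed
  have add: "?f (V + W) = ?f V + ?f W" if "V \<in> StT X" "W \<in> StT X" for V W
    using that by (simp add: phi_add Sadd phiP psi_add Qm_add)
  have sc: "?f (c *\<^sub>R V) = c *\<^sub>R ?f V" if "V \<in> StT X" for c V
    using that by (simp add: phi_scale Ssc phiP psi_scale Qm_scale)
  have met: "eucl_metric (?f V) (?f W) = eucl_metric V W" if V: "V \<in> StT X" and W: "W \<in> StT X" for V W
  proof -
    have "eucl_metric (?f V) (?f W) = eucl_metric (psi X (S (phi X V))) (psi X (S (phi X W)))"
      by (rule g3)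
    also have "\<dots> = gprod (phi X (psi X (S (phi X V)))) (phi X (psi X (S (phi X W))))"
      using A6[OF X] psiT Sin phiP V W by simp
    also have "\<dots> = gprod (phi X V) (phi X W)" using pp Sin phiP V W Sm by simp
    also have "\<dots> = eucl_metric V W" using A6[OF X V W] .
    finally show ?thesis .
  qed
  show ?thesis unfolding lin_isom_def bij_betw_def
    using inj surj add sc met by (intro conjI ballI allI) simp_all
qed

lemma L_C: assumes X: "X \<in> Stiefel" and oR: "orthogonal_matrix R" and o\<theta>: "orthogonal_matrix \<theta>"
  and T: "O_N X T"
  shows "lin_isom eucl_metric eucl_metric (gcompl eucl_metric (StT X)) (gcompl eucl_metric (StT (R ** X ** transpose \<theta>)))
           (\<lambda>W. Qm R \<theta> (T W))"
proof -
  note g1 = G1[OF oR o\<theta>] and g3 = G3[OF oR o\<theta>] and g7 = G7[OF oR o\<theta>]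
  have Tall: "bij_betw T (StN X) (StN X) \<and> (\<forall>x\<in>StN X. \<forall>y\<in>StN X. T (x + y) = T x + T y) \<and>
     (\<forall>c. \<forall>x\<in>StN X. T (c *\<^sub>R x) = c *\<^sub>R T x) \<and> (\<forall>x\<in>StN X. \<forall>y\<in>StN X. eucl_metric (T x) (T y) = eucl_metric x y)"
    using T unfolding O_N_def lin_isom_def .
  have Tb: "bij_betw T (StN X) (StN X)" using Tall by (rule conjunct1)
  have Tadd: "T (x + y) = T x + T y" if "x \<in> StN X" "y \<in> StN X" for x y
    using bspec[OF bspec[OF conjunct1[OF conjunct2[OF Tall]] that(1)] that(2)] .
  have Tsc: "T (c *\<^sub>R x) = c *\<^sub>R T x" if "x \<in> StN X" for c x
    using bspec[OF spec[OF conjunct1[OF conjunct2[OF conjunct2[OF Tall]]], of c] that] .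
  have Tm: "eucl_metric (T x) (T y) = eucl_metric x y" if "x \<in> StN X" "y \<in> StN X" for x y
    using bspec[OF bspec[OF conjunct2[OF conjunct2[OF conjunct2[OF Tall]]] that(1)] that(2)] .
  have Tin: "\<And>x. x \<in> StN X \<Longrightarrow> T x \<in> StN X" using bij_betw_apply[OF Tb] .
  have Tinj: "inj_on T (StN X)" using Tb by (simp add: bij_betw_def)
  have Timg: "T ` StN X = StN X" using Tb by (simp add: bij_betw_def)
  let ?f = "\<lambda>W. Qm R \<theta> (T W)"
  have inj: "inj_on ?f (StN X)"
  proof (rule inj_onI)
    fix V W assume V: "V \<in> StN X" and W: "W \<in> StN X" and e: "?f V = ?f W"
    have "T V = T W" using arg_cong[OF e, of "Qi R \<theta>"] g1 by simp
    thus "V = W" using Tinj V W by (meson inj_onD)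
  qed
  have surj: "?f ` StN X = gcompl eucl_metric (StT (R ** X ** transpose \<theta>))"
  proof
    show "?f ` StN X \<subseteq> gcompl eucl_metric (StT (R ** X ** transpose \<theta>))"
    proof (rule image_subsetI)
      fix W assume W: "W \<in> StN X"
      show "?f W \<in> gcompl eucl_metric (StT (R ** X ** transpose \<theta>))"
        using g7[of "?f W"] g1(1) Tin[OF W] by simp
    qed
  next
    show "gcompl eucl_metric (StT (R ** X ** transpose \<theta>)) \<subseteq> ?f ` StN X"
    proof
      fix Y assume Y: "Y \<in> gcompl eucl_metric (StT (R ** X ** transpose \<theta>))"
      have N: "Qi R \<theta> Y \<in> StN X" using Y g7 by simp
      have "Qi R \<theta> Y \<in> T ` StN X" using Timg N by simp
      then obtain W where W: "W \<in> StN X" "T W = Qi R \<theta> Y" by (auto elim!: imageE)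
      have "?f W = Y" using W g1 by simp
      thus "Y \<in> ?f ` StN X" using W(1) by (rule image_eqI[OF sym])
    qed
  qed
  show ?thesis unfolding lin_isom_def bij_betw_def G6[of X]
    using inj surj by (intro conjI ballI allI) (simp_all add: Tadd Tsc Tm g3 Qm_add Qm_scale)
qed

lemma triv_deriv: "at t within I = bot \<Longrightarrow> (f has_vector_derivative f') (at t within I)"
  by (simp add: has_vector_derivative_def has_derivative_def bounded_linear_scaleR_left)

lemma zero_comp:
  assumes nb: "at t within I \<noteq> bot" and t: "t \<in> I"
    and d: "(f has_vector_derivative f') (at t within I)" and z: "\<forall>s\<in>I. f s \<bullet> c = 0"
  shows "f' \<bullet> (c::'a::real_inner) = 0"
proof -
  have d1: "((\<lambda>s. f s \<bullet> c) has_vector_derivative (f t \<bullet> 0 + f' \<bullet> c)) (at t within I)"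
    by (rule inner_deriv[OF d has_vector_derivative_const])
  have d2: "((\<lambda>s. f s \<bullet> c) has_vector_derivative 0) (at t within I)"
    by (rule has_vector_derivative_transform[OF t _ has_vector_derivative_const]) (use z in simp)
  show ?thesis using vector_derivative_unique_within[OF nb d1 d2] by simp
qed

lemma deriv_from_inner:
  assumes "\<And>b. b \<in> Basis \<Longrightarrow> ((\<lambda>s. Z s \<bullet> b) has_vector_derivative 0) (at t within I)"
  shows "((Z::real \<Rightarrow> 'a::euclidean_space) has_vector_derivative 0) (at t within I)"
proof -
  have "((\<lambda>s. \<Sum>b\<in>Basis. (Z s \<bullet> b) *\<^sub>R b) has_vector_derivative (\<Sum>b\<in>(Basis::'a set). 0 *\<^sub>R b)) (at t within I)"
    by (intro has_vector_derivative_sum bounded_linear.has_vector_derivative[OF bounded_linear_scaleR_left] assms)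
  thus ?thesis by (simp add: euclidean_representation)
qed

lemma const_on:
  assumes I: "is_interval I" and d: "\<forall>t\<in>I. (Z has_vector_derivative 0) (at t within I)"
    and s: "s \<in> I" and z: "0 \<in> I"
  shows "Z s = Z 0"
proof -
  have "\<exists>c. \<forall>x\<in>I. Z x = c"
    by (rule has_derivative_zero_constant[OF is_interval_convex[OF I]])
       (use d in \<open>auto simp: has_vector_derivative_def\<close>)
  thus ?thesis using s z by metis
qed

lemma TN_orth: "V \<in> StT X \<Longrightarrow> N \<in> StN X \<Longrightarrow> N \<bullet> V = 0"
  unfolding StN_def frob_inner by blast

lemma TN_orth2: "V \<in> StT X \<Longrightarrow> N \<in> StN X \<Longrightarrow> V \<bullet> N = 0"
  by (metis TN_orth inner_commute)

lemma T_by_inner: assumes X: "X \<in> Stiefel" and h: "\<forall>N\<in>StN X. V \<bullet> N = 0" shows "V \<in> StT X"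
proof -
  define N where "N = PperpSt X V"
  have N: "N \<in> StN X" unfolding N_def by (rule Pperp_normal)
  have T: "V - N \<in> StT X" unfolding N_def by (rule Pperp_tangent[OF X])
  have "V \<bullet> N = 0" using h N by simp
  moreover have "(V - N) \<bullet> N = 0" using TN_orth2[OF T N] .
  ultimately have "N \<bullet> N = 0" by (simp add: inner_diff_left)
  hence "N = 0" by simp
  thus ?thesis using T by simp
qed

lemma N_by_inner: "\<forall>U\<in>StT X. V \<bullet> U = 0 \<Longrightarrow> V \<in> StN X"
  unfolding StN_def frob_inner by blast

lemma zero_StT: "0 \<in> StT X" by (simp add: StT_def tr_zero)
lemma zero_gcompl: "0 \<in> gcompl eucl_metric U" by (simp add: gcompl_def eucl_metric_def tr_zero trace_def)

lemma psi_neg: "psi X (- a) = - psi X a"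
  by (simp add: psi_def mm_lneg mm_rneg)

lemma psi_bl: "bounded_linear (psi X)"
  unfolding linear_conv_bounded_linear[symmetric] by (rule linearI) (simp_all add: psi_add psi_scale)

lemma psi_deriv: "(f has_vector_derivative f') F \<Longrightarrow> ((\<lambda>s. psi X (f s)) has_vector_derivative psi X f') F"
  by (rule bounded_linear.has_vector_derivative[OF psi_bl])

lemma Qm_deriv:
  assumes "(R has_vector_derivative R') (at t within I)" "(\<theta> has_vector_derivative \<theta>') (at t within I)"
    "(W has_vector_derivative W') (at t within I)"
  shows "((\<lambda>s. Qm (R s) (\<theta> s) (W s)) has_vector_derivative
     (R t ** W t ** transpose \<theta>' + (R t ** W' + R' ** W t) ** transpose (\<theta> t))) (at t within I)"
  unfolding Qm_def by (rule mm_deriv[OF mm_deriv[OF assms(1,3)] tr_deriv[OF assms(2)]])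

lemma Qm_deriv_eq:
  assumes "transpose (snd \<xi>) = - snd \<xi>"
  shows "R ** W ** transpose (\<theta> ** snd \<xi>) + (R ** W' + (R ** fst \<xi>) ** W) ** transpose \<theta>
    = Qm R \<theta> (f_act \<xi> W + W')"
  using assms by (simp add: Qm_def f_act_def msimps algebra_simps)

theorem theorem5p10:
  fixes X :: "real^'k^'n"
    and I :: "real set"
    and \<beta> \<beta>' :: "real \<Rightarrow> real^'k^'n"
    and S :: "real \<Rightarrow> (real^'n^'n) \<times> (real^'k^'k) \<Rightarrow> (real^'n^'n) \<times> (real^'k^'k)"
    and R :: "real \<Rightarrow> real^'n^'n"
    and \<theta> :: "real \<Rightarrow> real^'k^'k"
    and T :: "real \<Rightarrow> real^'k^'n \<Rightarrow> real^'k^'n"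
    and u \<xi> :: "real \<Rightarrow> (real^'n^'n) \<times> (real^'k^'k)"
    and \<beta>h :: "real \<Rightarrow> real^'k^'n"
    and B C :: "real \<Rightarrow> real^'k^'n \<Rightarrow> real^'k^'n"
  assumes kn: "CARD('k) \<le> CARD('n)"
    and X: "X \<in> Stiefel"
    and I: "is_interval I" "0 \<in> I"
    and \<beta>_in: "\<forall>t\<in>I. \<beta> t \<in> StT X"
    and \<beta>_deriv: "\<forall>t\<in>I. (\<beta> has_vector_derivative \<beta>' t) (at t within I)"
    and u_def: "\<forall>t. u t = (\<beta>' t ** transpose X - X ** transpose (\<beta>' t), transpose X ** \<beta>' t)"
    and S_O: "\<forall>t\<in>I. O_p X (S t)"
    and S_ode: "\<forall>t\<in>I. \<forall>Z\<in>pset X.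
          ((\<lambda>s. S s Z) has_vector_derivative (- (1/2)) *\<^sub>R pr_p X (ad (S t (u t)) (S t Z))) (at t within I)"
    and S_0: "\<forall>Z\<in>pset X. S 0 Z = Z"
    and \<xi>_def: "\<forall>t. \<xi> t = S t (u t)"
    and R_O: "\<forall>t\<in>I. orthogonal_matrix (R t) \<and> orthogonal_matrix (\<theta> t)"
    and R_ode: "\<forall>t\<in>I. (R has_vector_derivative R t ** fst (\<xi> t)) (at t within I)"
    and \<theta>_ode: "\<forall>t\<in>I. (\<theta> has_vector_derivative \<theta> t ** snd (\<xi> t)) (at t within I)"
    and R_0: "R 0 = mat 1" and \<theta>_0: "\<theta> 0 = mat 1"
    and T_O: "\<forall>t\<in>I. O_N X (T t)"
    and T_ode: "\<forall>t\<in>I. \<forall>W\<in>StN X.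
          ((\<lambda>s. T s W) has_vector_derivative - PperpSt X (f_act (\<xi> t) (T t W))) (at t within I)"
    and T_0: "\<forall>W\<in>StN X. T 0 W = W"
    and \<beta>h_def: "\<forall>t. \<beta>h t = R t ** X ** transpose (\<theta> t)"
    and B_def: "\<forall>t V. B t V =
          (let \<eta> = S t (V ** transpose X - X ** transpose V, transpose X ** V)
           in R t ** (fst \<eta> ** X - X ** snd \<eta>) ** transpose (\<theta> t))"
    and C_def: "\<forall>t W. C t W = R t ** T t W ** transpose (\<theta> t)"
  shows "ext_rolling eucl_metric (StT X) (\<lambda>_. StT X) Stiefel StT I \<beta> \<beta>h B C"
proof -
  have tI: "\<And>t. t \<in> I \<Longrightarrow> orthogonal_matrix (R t)" "\<And>t. t \<in> I \<Longrightarrow> orthogonal_matrix (\<theta> t)"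
    using R_O by auto
  have bh: "\<And>t. \<beta>h t = R t ** X ** transpose (\<theta> t)" using \<beta>h_def by simp
  have Beq: "\<And>t. B t = (\<lambda>V. Qm (R t) (\<theta> t) (psi X (S t (phi X V))))"
    by (rule ext) (simp add: B_def Let_def Qm_def psi_def phi_def)
  have Ceq: "\<And>t. C t = (\<lambda>W. Qm (R t) (\<theta> t) (T t W))"
    by (rule ext) (simp add: C_def Qm_def)
  have uphi: "\<And>t. u t = phi X (\<beta>' t)" using u_def by (simp add: phi_def)
  have LB: "\<And>t. t \<in> I \<Longrightarrow> lin_isom eucl_metric eucl_metric (StT X) (StT (\<beta>h t)) (B t)"
    unfolding Beq bh using L_B[OF X tI] S_O by blast
  have LC: "\<And>t. t \<in> I \<Longrightarrow> lin_isom eucl_metric eucl_metric (gcompl eucl_metric (StT X)) (gcompl eucl_metric (StT (\<beta>h t))) (C t)"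
    unfolding Ceq bh using L_C[OF X tI] T_O by blast
  have Sin: "\<And>t e. t \<in> I \<Longrightarrow> e \<in> pset X \<Longrightarrow> S t e \<in> pset X"
    using S_O unfolding O_p_def lin_isom_def by (meson bij_betw_apply)
  have Tin: "\<And>t e. t \<in> I \<Longrightarrow> e \<in> StN X \<Longrightarrow> T t e \<in> StN X"
    using T_O unfolding O_N_def lin_isom_def by (meson bij_betw_apply)
  have Bin: "\<And>t V. t \<in> I \<Longrightarrow> V \<in> StT X \<Longrightarrow> B t V \<in> StT (\<beta>h t)"
    using LB unfolding lin_isom_def by (meson bij_betw_apply)
  have Bm: "\<And>t V W. t \<in> I \<Longrightarrow> V \<in> StT X \<Longrightarrow> W \<in> StT X \<Longrightarrow> eucl_metric (B t V) (B t W) = eucl_metric V W"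
    using LB unfolding lin_isom_def by blast
  have Cin: "\<And>t V. t \<in> I \<Longrightarrow> V \<in> StN X \<Longrightarrow> C t V \<in> gcompl eucl_metric (StT (\<beta>h t))"
    using LC unfolding lin_isom_def G6 by (meson bij_betw_apply)
  have Cm: "\<And>t V W. t \<in> I \<Longrightarrow> V \<in> StN X \<Longrightarrow> W \<in> StN X \<Longrightarrow> eucl_metric (C t V) (C t W) = eucl_metric V W"
    using LC unfolding lin_isom_def G6 by blast
  have \<beta>'T: "\<beta>' t \<in> StT X" if t: "t \<in> I" and nb: "at t within I \<noteq> bot" for t
  proof (rule T_by_inner[OF X], safe)
    fix N assume N: "N \<in> StN X"
    show "\<beta>' t \<bullet> N = 0"
      by (rule zero_comp[OF nb t]) (use \<beta>_deriv t \<beta>_in TN_orth2[OF _ N] in auto)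
  qed
  have \<xi>p: "\<xi> t \<in> pset X" if t: "t \<in> I" and nb: "at t within I \<noteq> bot" for t
    using Sin[OF t A4[OF X \<beta>'T[OF t nb]]] \<xi>_def uphi by simp
  have \<xi>skew: "transpose (snd (\<xi> t)) = - snd (\<xi> t)" if t: "t \<in> I" and nb: "at t within I \<noteq> bot" for t
    using pset_gset[OF \<xi>p[OF t nb]] by (auto simp: gset_def)
  have DB: "((\<lambda>s. B s V0) has_vector_derivative
      Qm (R t) (\<theta> t) (f_act (\<xi> t) (psi X (S t (phi X V0))) - (1/2) *\<^sub>R psi X (ad (\<xi> t) (S t (phi X V0))))) (at t within I)"
    if t: "t \<in> I" and nb: "at t within I \<noteq> bot" and V0: "V0 \<in> StT X" for t V0
  proof -
    have Z0: "phi X V0 \<in> pset X" using A4[OF X V0] .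
    have dS: "((\<lambda>s. S s (phi X V0)) has_vector_derivative (- (1/2)) *\<^sub>R pr_p X (ad (\<xi> t) (S t (phi X V0)))) (at t within I)"
      using S_ode t Z0 \<xi>_def by simp
    have adg: "ad (\<xi> t) (S t (phi X V0)) \<in> gset"
      by (rule ad_gset[OF pset_gset[OF \<xi>p[OF t nb]] pset_gset[OF Sin[OF t Z0]]])
    have dW: "((\<lambda>s. psi X (S s (phi X V0))) has_vector_derivative - (1/2) *\<^sub>R psi X (ad (\<xi> t) (S t (phi X V0)))) (at t within I)"
      using psi_deriv[where X=X, OF dS] by (simp add: psi_scale psi_neg psi_pr[OF X adg])
    have "((\<lambda>s. Qm (R s) (\<theta> s) (psi X (S s (phi X V0)))) has_vector_derivative
       Qm (R t) (\<theta> t) (f_act (\<xi> t) (psi X (S t (phi X V0))) + - (1/2) *\<^sub>R psi X (ad (\<xi> t) (S t (phi X V0))))) (at t within I)"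
      using Qm_deriv[OF R_ode[rule_format, OF t] \<theta>_ode[rule_format, OF t] dW] Qm_deriv_eq[OF \<xi>skew[OF t nb]]
      by simp
    thus ?thesis unfolding Beq by simp
  qed
  have DC: "((\<lambda>s. C s W0) has_vector_derivative
      Qm (R t) (\<theta> t) (f_act (\<xi> t) (T t W0) - PperpSt X (f_act (\<xi> t) (T t W0)))) (at t within I)"
    if t: "t \<in> I" and nb: "at t within I \<noteq> bot" and W0: "W0 \<in> StN X" for t W0
  proof -
    have dT: "((\<lambda>s. T s W0) has_vector_derivative - PperpSt X (f_act (\<xi> t) (T t W0))) (at t within I)"
      using T_ode t W0 by simp
    have "((\<lambda>s. Qm (R s) (\<theta> s) (T s W0)) has_vector_derivative
       Qm (R t) (\<theta> t) (f_act (\<xi> t) (T t W0) + - PperpSt X (f_act (\<xi> t) (T t W0)))) (at t within I)"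
      using Qm_deriv[OF R_ode[rule_format, OF t] \<theta>_ode[rule_format, OF t] dT] Qm_deriv_eq[OF \<xi>skew[OF t nb]]
      by simp
    thus ?thesis unfolding Ceq by simp
  qed
  have Dbh: "(\<beta>h has_vector_derivative B t (\<beta>' t)) (at t within I)" if t: "t \<in> I" for t
  proof (cases "at t within I = bot")
    case True thus ?thesis by (rule triv_deriv)
  next
    case False
    hence nb: "at t within I \<noteq> bot" .
    have "((\<lambda>s. Qm (R s) (\<theta> s) X) has_vector_derivative Qm (R t) (\<theta> t) (f_act (\<xi> t) X + 0)) (at t within I)"
      by (rule has_vector_derivative_eq_rhs[OF Qm_deriv[OF R_ode[rule_format, OF t] \<theta>_ode[rule_format, OF t] has_vector_derivative_const]])
        (rule Qm_deriv_eq[OF \<xi>skew[OF t nb]])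
    moreover have "\<beta>h = (\<lambda>s. Qm (R s) (\<theta> s) X)" by (rule ext) (simp add: bh Qm_def)
    moreover have "B t (\<beta>' t) = Qm (R t) (\<theta> t) (f_act (\<xi> t) X + 0)"
      by (simp add: Beq \<xi>_def uphi[symmetric] f_act_def psi_def)
    ultimately show ?thesis by simp
  qed
  have P1: "\<forall>t\<in>I. \<beta> t \<in> StT X \<and> \<beta>h t \<in> Stiefel"
    using \<beta>_in G4[OF tI X] bh by simp
  have P4: "\<exists>\<alpha>'. \<forall>t\<in>I. (\<beta> has_vector_derivative \<alpha>' t) (at t within I) \<and>
                  (\<beta>h has_vector_derivative B t (\<alpha>' t)) (at t within I)"
    using \<beta>_deriv Dbh by blast
  have P5: "\<forall>Z. (\<forall>t\<in>I. Z t \<in> StT X) \<longrightarrow>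
          (tan_parallel eucl_metric StT I \<beta>h (\<lambda>t. B t (Z t)) \<longleftrightarrow> tan_parallel eucl_metric (\<lambda>_. StT X) I \<beta> Z)"
  proof (intro allI impI)
    fix Z assume Zin: "\<forall>t\<in>I. Z t \<in> StT X"
    show "tan_parallel eucl_metric StT I \<beta>h (\<lambda>t. B t (Z t)) \<longleftrightarrow> tan_parallel eucl_metric (\<lambda>_. StT X) I \<beta> Z"
    proof
      assume "tan_parallel eucl_metric StT I \<beta>h (\<lambda>t. B t (Z t))"
      then obtain Y' where Y: "\<forall>t\<in>I. B t (Z t) \<in> StT (\<beta>h t) \<and> ((\<lambda>t. B t (Z t)) has_vector_derivative Y' t) (at t within I)
           \<and> Y' t \<in> gcompl eucl_metric (StT (\<beta>h t))"
        unfolding tan_parallel_def by blast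
      have Zd: "(Z has_vector_derivative 0) (at t within I)" if t: "t \<in> I" for t
      proof (cases "at t within I = bot")
        case True thus ?thesis by (rule triv_deriv)
      next
        case False
        hence nb: "at t within I \<noteq> bot" .
        note o1 = tI(1)[OF t] and o2 = tI(2)[OF t]
        show ?thesis
        proof (rule deriv_from_inner)
          fix b :: "real^'k^'n" assume "b \<in> Basis"
          define bN where "bN = PperpSt X b"
          define bT where "bT = b - bN"
          have bN: "bN \<in> StN X" unfolding bN_def by (rule Pperp_normal)
          have bT: "bT \<in> StT X" unfolding bT_def bN_def by (rule Pperp_tangent[OF X])
          have h1: "((\<lambda>s. Z s \<bullet> bN) has_vector_derivative 0) (at t within I)"
            by (rule has_vector_derivative_transform[OF t _ has_vector_derivative_const])
               (use Zin TN_orth2[OF _ bN] in auto)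
          have dY: "((\<lambda>s. B s (Z s)) has_vector_derivative Y' t) (at t within I)" using Y t by blast
          define M where "M = f_act (\<xi> t) (psi X (S t (phi X bT))) - (1/2) *\<^sub>R psi X (ad (\<xi> t) (S t (phi X bT)))"
          have dYb: "((\<lambda>s. B s bT) has_vector_derivative Qm (R t) (\<theta> t) M) (at t within I)"
            unfolding M_def by (rule DB[OF t nb bT])
          have MN: "M \<in> StN X" unfolding M_def
            by (rule M_normal[OF X \<xi>p[OF t nb] Sin[OF t A4[OF X bT]]])
          have e1: "Y' t \<bullet> B t bT = 0"
          proof -
            have "eucl_metric (Y' t) (B t bT) = 0" using Y t Bin[OF t bT] by (auto simp: gcompl_def)
            thus ?thesis by (simp add: eucl_inner)
          qed
          have e2: "B t (Z t) \<bullet> Qm (R t) (\<theta> t) M = 0"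
          proof -
            have QiT: "Qi (R t) (\<theta> t) (B t (Z t)) \<in> StT X"
              using Bin[OF t] Zin t G5[OF o1 o2] bh by simp
            have "eucl_metric M (Qi (R t) (\<theta> t) (B t (Z t))) = 0"
              using MN QiT by (simp add: StN_def eucl_metric_def frob_def)
            hence "eucl_metric (Qm (R t) (\<theta> t) M) (B t (Z t)) = 0" by (simp add: G2[OF o1 o2])
            thus ?thesis by (simp add: eucl_inner inner_commute)
          qed
          have h2: "((\<lambda>s. Z s \<bullet> bT) has_vector_derivative 0) (at t within I)"
          proof (rule has_vector_derivative_transform[OF t])
            show "Z s \<bullet> bT = B s (Z s) \<bullet> B s bT" if s: "s \<in> I" for s
              using Bm[OF s _ bT, of "Z s"] Zin s by (simp add: eucl_inner)
            show "((\<lambda>s. B s (Z s) \<bullet> B s bT) has_vector_derivative 0) (at t within I)"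
              using inner_deriv[OF dY dYb] e1 e2 by simp
          qed
          have "((\<lambda>s. Z s \<bullet> bT + Z s \<bullet> bN) has_vector_derivative 0 + 0) (at t within I)"
            by (rule has_vector_derivative_add[OF h2 h1])
          moreover have "(\<lambda>s. Z s \<bullet> bT + Z s \<bullet> bN) = (\<lambda>s. Z s \<bullet> b)"
            by (rule ext) (simp add: bT_def inner_diff_right)
          ultimately show "((\<lambda>s. Z s \<bullet> b) has_vector_derivative 0) (at t within I)" by simp
        qed
      qed
      show "tan_parallel eucl_metric (\<lambda>_. StT X) I \<beta> Z"
        unfolding tan_parallel_def by (rule exI[of _ "\<lambda>t. 0"]) (use Zin Zd zero_gcompl in auto)
    next
      assume "tan_parallel eucl_metric (\<lambda>_. StT X) I \<beta> Z"
      then obtain Z' where Z: "\<forall>t\<in>I. Z t \<in> StT X \<and> (Z has_vector_derivative Z' t) (at t within I)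
           \<and> Z' t \<in> gcompl eucl_metric (StT X)"
        unfolding tan_parallel_def by blast
      have Zd: "\<forall>t\<in>I. (Z has_vector_derivative 0) (at t within I)"
      proof
        fix t assume t: "t \<in> I"
        show "(Z has_vector_derivative 0) (at t within I)"
        proof (cases "at t within I = bot")
          case True thus ?thesis by (rule triv_deriv)
        next
          case False
          have Z'N: "Z' t \<in> StN X" using Z t G6 by auto
          have dZ: "(Z has_vector_derivative Z' t) (at t within I)" using Z t by blast
          have "Z' t \<bullet> Z' t = 0"
            by (rule zero_comp[OF False t dZ]) (use Zin TN_orth2[OF _ Z'N] in auto)
          hence "Z' t = 0" by simp
          thus ?thesis using dZ by simp
        qed
      qed
      have Zc: "Z s = Z 0" if "s \<in> I" for s using const_on[OF I(1) Zd that I(2)] .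
      have V0: "Z 0 \<in> StT X" using Zin I(2) by blast
      define Y' where "Y' t = (if at t within I = bot then 0 else
          Qm (R t) (\<theta> t) (f_act (\<xi> t) (psi X (S t (phi X (Z 0)))) - (1/2) *\<^sub>R psi X (ad (\<xi> t) (S t (phi X (Z 0))))))" for t
      show "tan_parallel eucl_metric StT I \<beta>h (\<lambda>t. B t (Z t))"
        unfolding tan_parallel_def
      proof (intro exI[of _ Y'] ballI conjI)
        fix t assume t: "t \<in> I"
        note o1 = tI(1)[OF t] and o2 = tI(2)[OF t]
        show "B t (Z t) \<in> StT (\<beta>h t)" using Bin t Zin by blast
        show "((\<lambda>t. B t (Z t)) has_vector_derivative Y' t) (at t within I)"
        proof (cases "at t within I = bot")
          case True thus ?thesis by (rule triv_deriv)
        next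
          case False
          have "Y' t = Qm (R t) (\<theta> t) (f_act (\<xi> t) (psi X (S t (phi X (Z 0)))) - (1/2) *\<^sub>R psi X (ad (\<xi> t) (S t (phi X (Z 0)))))"
            using False by (simp add: Y'_def)
          thus ?thesis
            by (simp only:) (rule has_vector_derivative_transform[OF t _ DB[OF t False V0]], simp add: Zc)
        qed
        show "Y' t \<in> gcompl eucl_metric (StT (\<beta>h t))"
        proof (cases "at t within I = bot")
          case True thus ?thesis by (simp add: Y'_def zero_gcompl)
        next
          case False
          have "f_act (\<xi> t) (psi X (S t (phi X (Z 0)))) - (1/2) *\<^sub>R psi X (ad (\<xi> t) (S t (phi X (Z 0)))) \<in> StN X"
            by (rule M_normal[OF X \<xi>p[OF t False] Sin[OF t A4[OF X V0]]])
          thus ?thesis unfolding Y'_def bh using False G7[OF o1 o2] G1[OF o1 o2] by simp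
        qed
      qed
    qed
  qed
  have P6: "\<forall>Z. (\<forall>t\<in>I. Z t \<in> gcompl eucl_metric (StT X)) \<longrightarrow>
          (nor_parallel eucl_metric StT I \<beta>h (\<lambda>t. C t (Z t)) \<longleftrightarrow> nor_parallel eucl_metric (\<lambda>_. StT X) I \<beta> Z)"
  proof (intro allI impI)
    fix Z assume Zin0: "\<forall>t\<in>I. Z t \<in> gcompl eucl_metric (StT X)"
    have Zin: "\<forall>t\<in>I. Z t \<in> StN X" using Zin0 by (simp add: G6)
    show "nor_parallel eucl_metric StT I \<beta>h (\<lambda>t. C t (Z t)) \<longleftrightarrow> nor_parallel eucl_metric (\<lambda>_. StT X) I \<beta> Z"
    proof
      assume "nor_parallel eucl_metric StT I \<beta>h (\<lambda>t. C t (Z t))"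
      then obtain Y' where Y: "\<forall>t\<in>I. C t (Z t) \<in> gcompl eucl_metric (StT (\<beta>h t)) \<and> ((\<lambda>t. C t (Z t)) has_vector_derivative Y' t) (at t within I)
           \<and> Y' t \<in> StT (\<beta>h t)"
        unfolding nor_parallel_def by blast
      have Zd: "(Z has_vector_derivative 0) (at t within I)" if t: "t \<in> I" for t
      proof (cases "at t within I = bot")
        case True thus ?thesis by (rule triv_deriv)
      next
        case False
        hence nb: "at t within I \<noteq> bot" .
        note o1 = tI(1)[OF t] and o2 = tI(2)[OF t]
        show ?thesis
        proof (rule deriv_from_inner)
          fix b :: "real^'k^'n" assume "b \<in> Basis"
          define bN where "bN = PperpSt X b"
          define bT where "bT = b - bN"
          have bN: "bN \<in> StN X" unfolding bN_def by (rule Pperp_normal)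
          have bT: "bT \<in> StT X" unfolding bT_def bN_def by (rule Pperp_tangent[OF X])
          have h1: "((\<lambda>s. Z s \<bullet> bT) has_vector_derivative 0) (at t within I)"
            by (rule has_vector_derivative_transform[OF t _ has_vector_derivative_const])
               (use Zin TN_orth[OF bT] in auto)
          have dY: "((\<lambda>s. C s (Z s)) has_vector_derivative Y' t) (at t within I)" using Y t by blast
          define P where "P = f_act (\<xi> t) (T t bN) - PperpSt X (f_act (\<xi> t) (T t bN))"
          have dYc: "((\<lambda>s. C s bN) has_vector_derivative Qm (R t) (\<theta> t) P) (at t within I)"
            unfolding P_def by (rule DC[OF t nb bN])
          have PT: "P \<in> StT X" unfolding P_def by (rule Pperp_tangent[OF X])
          have e1: "Y' t \<bullet> C t bN = 0"
          proof -
            have "eucl_metric (C t bN) (Y' t) = 0" using Y t Cin[OF t bN] by (auto simp: gcompl_def)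
            thus ?thesis by (simp add: eucl_inner inner_commute)
          qed
          have e2: "C t (Z t) \<bullet> Qm (R t) (\<theta> t) P = 0"
          proof -
            have QiN: "Qi (R t) (\<theta> t) (C t (Z t)) \<in> StN X"
              using Cin[OF t] Zin t G7[OF o1 o2] bh by simp
            have "P \<bullet> Qi (R t) (\<theta> t) (C t (Z t)) = 0" by (rule TN_orth2[OF PT QiN])
            hence "eucl_metric P (Qi (R t) (\<theta> t) (C t (Z t))) = 0" by (simp add: eucl_inner)
            hence "eucl_metric (Qm (R t) (\<theta> t) P) (C t (Z t)) = 0" by (simp add: G2[OF o1 o2])
            thus ?thesis by (simp add: eucl_inner inner_commute)
          qed
          have h2: "((\<lambda>s. Z s \<bullet> bN) has_vector_derivative 0) (at t within I)"
          proof (rule has_vector_derivative_transform[OF t])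
            show "Z s \<bullet> bN = C s (Z s) \<bullet> C s bN" if s: "s \<in> I" for s
              using Cm[OF s _ bN, of "Z s"] Zin s by (simp add: eucl_inner)
            show "((\<lambda>s. C s (Z s) \<bullet> C s bN) has_vector_derivative 0) (at t within I)"
              using inner_deriv[OF dY dYc] e1 e2 by simp
          qed
          have "((\<lambda>s. Z s \<bullet> bT + Z s \<bullet> bN) has_vector_derivative 0 + 0) (at t within I)"
            by (rule has_vector_derivative_add[OF h1 h2])
          moreover have "(\<lambda>s. Z s \<bullet> bT + Z s \<bullet> bN) = (\<lambda>s. Z s \<bullet> b)"
            by (rule ext) (simp add: bT_def inner_diff_right)
          ultimately show "((\<lambda>s. Z s \<bullet> b) has_vector_derivative 0) (at t within I)" by simp
        qed
      qed
      show "nor_parallel eucl_metric (\<lambda>_. StT X) I \<beta> Z"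
        unfolding nor_parallel_def by (rule exI[of _ "\<lambda>t. 0"]) (use Zin0 Zd zero_StT in auto)
    next
      assume "nor_parallel eucl_metric (\<lambda>_. StT X) I \<beta> Z"
      then obtain Z' where Z: "\<forall>t\<in>I. Z t \<in> gcompl eucl_metric (StT X) \<and> (Z has_vector_derivative Z' t) (at t within I)
           \<and> Z' t \<in> StT X"
        unfolding nor_parallel_def by blast
      have Zd: "\<forall>t\<in>I. (Z has_vector_derivative 0) (at t within I)"
      proof
        fix t assume t: "t \<in> I"
        show "(Z has_vector_derivative 0) (at t within I)"
        proof (cases "at t within I = bot")
          case True thus ?thesis by (rule triv_deriv)
        next
          case False
          have Z'T: "Z' t \<in> StT X" using Z t by auto
          have dZ: "(Z has_vector_derivative Z' t) (at t within I)" using Z t by blast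
          have "Z' t \<bullet> Z' t = 0"
            by (rule zero_comp[OF False t dZ]) (use Zin TN_orth[OF Z'T] in auto)
          hence "Z' t = 0" by simp
          thus ?thesis using dZ by simp
        qed
      qed
      have Zc: "Z s = Z 0" if "s \<in> I" for s using const_on[OF I(1) Zd that I(2)] .
      have W0: "Z 0 \<in> StN X" using Zin I(2) by blast
      define Y' where "Y' t = (if at t within I = bot then 0 else
          Qm (R t) (\<theta> t) (f_act (\<xi> t) (T t (Z 0)) - PperpSt X (f_act (\<xi> t) (T t (Z 0)))))" for t
      show "nor_parallel eucl_metric StT I \<beta>h (\<lambda>t. C t (Z t))"
        unfolding nor_parallel_def
      proof (intro exI[of _ Y'] ballI conjI)
        fix t assume t: "t \<in> I"
        note o1 = tI(1)[OF t] and o2 = tI(2)[OF t]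
        show "C t (Z t) \<in> gcompl eucl_metric (StT (\<beta>h t))" using Cin t Zin by blast
        show "((\<lambda>t. C t (Z t)) has_vector_derivative Y' t) (at t within I)"
        proof (cases "at t within I = bot")
          case True thus ?thesis by (rule triv_deriv)
        next
          case False
          have "Y' t = Qm (R t) (\<theta> t) (f_act (\<xi> t) (T t (Z 0)) - PperpSt X (f_act (\<xi> t) (T t (Z 0))))"
            using False by (simp add: Y'_def)
          thus ?thesis
            by (simp only:) (rule has_vector_derivative_transform[OF t _ DC[OF t False W0]], simp add: Zc)
        qed
        show "Y' t \<in> StT (\<beta>h t)"
        proof (cases "at t within I = bot")
          case True thus ?thesis by (simp add: Y'_def zero_StT)
        next
          case False
          have "f_act (\<xi> t) (T t (Z 0)) - PperpSt X (f_act (\<xi> t) (T t (Z 0))) \<in> StT X"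
            by (rule Pperp_tangent[OF X])
          thus ?thesis unfolding Y'_def bh using False G5[OF o1 o2] G1[OF o1 o2] by simp
        qed
      qed
    qed
  qed
  show ?thesis unfolding ext_rolling_def using P1 LB LC P4 P5 P6 by blast
qed


end
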